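(* Let $P$ be a prime differential algebra and let $Q\subseteq P$ be a differential subalgebra. Then $Q$ is prime.
   Context: All algebras are commutative associative algebras (not necessarily with unity) over a field $k$ of characteristic zero. A differential algebra is such an algebra equipped with a $k$-linear derivation $a\mapsto a'$ (satisfying the Leibniz rule). A differential subalgebra is a subalgebra closed under the derivation; a differential ideal is an ideal $I$ with $I'\subseteq I$. A differential algebra is called prime if for any two nonzero differential ideals $A,B$ one has $AB\neq 0$. *)

theory Defs
  imports Main
begin

text \<open>A (commutative, associative, not necessarily unital) algebra over a field
  of characteristic zero: the ring structure comes from the type class comm_ring,
  scalar multiplication by the field 'k is given explicitly.\<close>

definition k_algebra :: "('k::field_char_0 \<Rightarrow> 'a::comm_ring \<Rightarrow> 'a) \<Rightarrow> bool" where
  "k_algebra sc \<longleftrightarrow>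
     (\<forall>a b x. sc (a + b) x = sc a x + sc b x) \<and>
     (\<forall>a x y. sc a (x + y) = sc a x + sc a y) \<and>
     (\<forall>a b x. sc (a * b) x = sc a (sc b x)) \<and>
     (\<forall>x. sc 1 x = x) \<and>
     (\<forall>a x y. sc a (x * y) = sc a x * y)"

definition derivation :: "('k::field_char_0 \<Rightarrow> 'a::comm_ring \<Rightarrow> 'a) \<Rightarrow> ('a \<Rightarrow> 'a) \<Rightarrow> bool" where
  "derivation sc d \<longleftrightarrow>
     (\<forall>x y. d (x + y) = d x + d y) \<and>
     (\<forall>a x. d (sc a x) = sc a (d x)) \<and>
     (\<forall>x y. d (x * y) = d x * y + x * d y)"

definition subspace_k :: "('k::field_char_0 \<Rightarrow> 'a::comm_ring \<Rightarrow> 'a) \<Rightarrow> 'a set \<Rightarrow> bool" where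
  "subspace_k sc S \<longleftrightarrow> 0 \<in> S \<and> (\<forall>x\<in>S. \<forall>y\<in>S. x + y \<in> S) \<and> (\<forall>a. \<forall>x\<in>S. sc a x \<in> S)"

definition diff_subalgebra :: "('k::field_char_0 \<Rightarrow> 'a::comm_ring \<Rightarrow> 'a) \<Rightarrow> ('a \<Rightarrow> 'a) \<Rightarrow> 'a set \<Rightarrow> bool" where
  "diff_subalgebra sc d Q \<longleftrightarrow> subspace_k sc Q \<and> (\<forall>x\<in>Q. \<forall>y\<in>Q. x * y \<in> Q) \<and> (\<forall>x\<in>Q. d x \<in> Q)"

definition diff_ideal :: "('k::field_char_0 \<Rightarrow> 'a::comm_ring \<Rightarrow> 'a) \<Rightarrow> ('a \<Rightarrow> 'a) \<Rightarrow> 'a set \<Rightarrow> 'a set \<Rightarrow> bool" where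
  "diff_ideal sc d S I \<longleftrightarrow> I \<subseteq> S \<and> subspace_k sc I \<and> (\<forall>r\<in>S. \<forall>x\<in>I. r * x \<in> I) \<and> (\<forall>x\<in>I. d x \<in> I)"

definition ideal_prod :: "'a::comm_ring set \<Rightarrow> 'a set \<Rightarrow> 'a set" where
  "ideal_prod A B = {x. \<exists>(n::nat) (f::nat \<Rightarrow> 'a) (g::nat \<Rightarrow> 'a). (\<forall>i<n. f i \<in> A \<and> g i \<in> B) \<and> x = (\<Sum>i<n. f i * g i)}"

definition diff_prime :: "('k::field_char_0 \<Rightarrow> 'a::comm_ring \<Rightarrow> 'a) \<Rightarrow> ('a \<Rightarrow> 'a) \<Rightarrow> 'a set \<Rightarrow> bool" where
  "diff_prime sc d S \<longleftrightarrow>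
     (\<forall>A B. diff_ideal sc d S A \<and> diff_ideal sc d S B \<and> A \<noteq> {0} \<and> B \<noteq> {0}
        \<longrightarrow> ideal_prod A B \<noteq> {0})"

end

theory Submission
  imports Defs
begin

lemma sc_zero: "k_algebra sc \<Longrightarrow> sc a 0 = 0"
proof -
  assume "k_algebra sc"
  then have "sc a (0+0) = sc a 0 + sc a 0" unfolding k_algebra_def by blast
  then show ?thesis by simp
qed

lemma d_zero: "derivation sc d \<Longrightarrow> d 0 = 0"
proof -
  assume "derivation sc d"
  then have "d (0+0) = d 0 + d 0" unfolding derivation_def by blast
  then show ?thesis by simp
qed

lemma ann_ideal:
  assumes ka: "k_algebra sc" and dd: "derivation sc d" and B: "\<forall>b\<in>B. d b \<in> B"
  shows "diff_ideal sc d UNIV {x. \<forall>b\<in>B. x * b = 0}"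
  unfolding diff_ideal_def subspace_k_def
proof (intro conjI ballI allI)
  show "{x. \<forall>b\<in>B. x * b = 0} \<subseteq> UNIV" by simp
  show "0 \<in> {x. \<forall>b\<in>B. x * b = 0}" by simp
  fix x y assume "x \<in> {x. \<forall>b\<in>B. x * b = 0}" "y \<in> {x. \<forall>b\<in>B. x * b = 0}"
  then show "x + y \<in> {x. \<forall>b\<in>B. x * b = 0}" by (simp add: distrib_right)
next
  fix a x assume "x \<in> {x. \<forall>b\<in>B. x * b = 0}"
  then show "sc a x \<in> {x. \<forall>b\<in>B. x * b = 0}"
  proof (simp, intro ballI)
    fix b assume "b \<in> B"
    have "sc a (x * b) = sc a x * b" using ka unfolding k_algebra_def by blast
    then show "sc a x * b = 0" using \<open>b \<in> B\<close> \<open>x \<in> {x. \<forall>b\<in>B. x * b = 0}\<close> sc_zero[OF ka] by simp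
  qed
next
  fix r x assume "x \<in> {x. \<forall>b\<in>B. x * b = 0}"
  then show "r * x \<in> {x. \<forall>b\<in>B. x * b = 0}" by (simp add: mult.assoc)
next
  fix x assume x: "x \<in> {x. \<forall>b\<in>B. x * b = 0}"
  show "d x \<in> {x. \<forall>b\<in>B. x * b = 0}"
  proof (simp, intro ballI)
    fix b assume b: "b \<in> B"
    have "d (x * b) = d x * b + x * d b" using dd by (simp add: derivation_def)
    moreover have "x * b = 0" "x * d b = 0" using x b B by auto
    ultimately show "d x * b = 0" using d_zero[OF dd] by simp
  qed
qed

lemma prod_zero_imp: "ideal_prod A B = {0} \<Longrightarrow> a \<in> A \<Longrightarrow> b \<in> B \<Longrightarrow> a * b = 0"
proof -
  assume h: "ideal_prod A B = {0}" "a \<in> A" "b \<in> B"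
  have "(\<Sum>i<(1::nat). (\<lambda>_. a) i * (\<lambda>_. b) i) \<in> ideal_prod A B"
    unfolding ideal_prod_def mem_Collect_eq
    apply (rule exI[of _ 1], rule exI[of _ "\<lambda>_. a"], rule exI[of _ "\<lambda>_. b"])
    using h(2,3) by simp
  then show ?thesis using h(1) by simp
qed

lemma prod_zero: "(\<forall>a\<in>A. \<forall>b\<in>B. a * b = 0) \<Longrightarrow> ideal_prod A B = {0}"
proof -
  assume h: "\<forall>a\<in>A. \<forall>b\<in>B. a * b = 0"
  have "ideal_prod A B \<subseteq> {0}" unfolding ideal_prod_def using h by auto
  moreover have "(\<Sum>i<(0::nat). (\<lambda>_. 0) i * (\<lambda>_. 0) i) \<in> ideal_prod A B"
    unfolding ideal_prod_def mem_Collect_eq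
    apply (rule exI[of _ 0], rule exI[of _ "\<lambda>_. 0"], rule exI[of _ "\<lambda>_. 0"])
    by simp
  ultimately show ?thesis by auto
qed

theorem lemma2:
  fixes sc :: "'k::field_char_0 \<Rightarrow> 'a::comm_ring \<Rightarrow> 'a" and d :: "'a \<Rightarrow> 'a" and Q :: "'a set"
  assumes "k_algebra sc"
    and "derivation sc d"
    and "diff_prime sc d (UNIV :: 'a set)"
    and "diff_subalgebra sc d Q"
  shows "diff_prime sc d Q"
  unfolding diff_prime_def
proof (intro allI impI notI)
  fix A B :: "'a set"
  assume h: "diff_ideal sc d Q A \<and> diff_ideal sc d Q B \<and> A \<noteq> {0} \<and> B \<noteq> {0}"
    and p: "ideal_prod A B = {0}"
  have AB: "\<forall>a\<in>A. \<forall>b\<in>B. a * b = 0" using prod_zero_imp[OF p] by blast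
  have A0: "0 \<in> A" and B0: "0 \<in> B" using h by (auto simp: diff_ideal_def subspace_k_def)
  obtain a where a: "a \<in> A" "a \<noteq> 0" using h A0 by blast
  obtain b where b: "b \<in> B" "b \<noteq> 0" using h B0 by blast
  define A' where "A' = {x. \<forall>b\<in>B. x * b = 0}"
  define B' where "B' = {y. \<forall>x\<in>A'. y * x = 0}"
  have dB: "\<forall>b\<in>B. d b \<in> B" using h by (simp add: diff_ideal_def)
  have iA: "diff_ideal sc d UNIV A'" unfolding A'_def by (rule ann_ideal[OF assms(1,2) dB])
  have dA': "\<forall>x\<in>A'. d x \<in> A'" using iA by (simp add: diff_ideal_def)
  have iB: "diff_ideal sc d UNIV B'" unfolding B'_def by (rule ann_ideal[OF assms(1,2) dA'])
  have "a \<in> A'" using AB a unfolding A'_def by blast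
  then have nA: "A' \<noteq> {0}" using a by blast
  have "b \<in> B'" using AB b unfolding A'_def B'_def by (simp add: mult.commute)
  then have nB: "B' \<noteq> {0}" using b by blast
  have "ideal_prod A' B' = {0}"
    by (rule prod_zero) (auto simp: B'_def mult.commute)
  then show False using assms(3) iA iB nA nB unfolding diff_prime_def by blast
qed

end
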